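(* Let $S$ be a set with $0\in S$. For every space $X\in\{V_S,\overline{V_S},\widehat{V_S},\overline{\overline{V_S}}\}$ the canonical projection $\pi_X\colon\mathrm{Aut}(X)\to\mathrm{Aut}(\mathbb Q_{\ge0})$, $f\mapsto D_f$, admits a group homomorphism $s_X\colon\mathrm{Aut}(\mathbb Q_{\ge0})\to\mathrm{Aut}(X)$ with $\pi_X\circ s_X=\mathrm{id}$. Moreover, $s_X\colon\mathrm{Aut}(\mathbb Q_{\ge0})\to\mathrm{Aut}(X)$ is continuous for $X=V_S$, and $s_X\colon\mathrm{Aut}(\mathbb Q_{\ge0})\to\mathrm{Aut}_M(X)$ is continuous for $X=\overline{V_S}$.
   Context: For $f\colon\mathbb Q_{>0}\to S$ let $\mathrm{supp}(f)=\{x:f(x)\ne0\}$. $V_S$: all $f$ with finite support; $\overline{V_S}$: all $f$ whose support is finite or a decreasing sequence converging to $0$; $\widehat{V_S}$: support finite or a decreasing sequence; $\overline{\overline{V_S}}$: support is conversely well-ordered (a decreasing countable ordinal). Each is a two-sorted ultrametric space with distance set $\mathbb Q_{\ge0}$ and $d(f,g)=\max\{r\in\mathbb Q_{>0}:f(r)\ne g(r)\}$ for $f\ne g$. A dc-automorphism of $X$ is a bijection $f$ of $X$ with an order automorphism $D_f$ of $\mathbb Q_{\ge0}$ such that $d(f(x),f(y))=D_f(d(x,y))$. $\mathrm{Aut}(X)$: group of dc-automorphisms with topology of pointwise convergence on both sorts (basic neighbourhoods: agree with $f$ on finitely many points and finitely many distances). $\mathrm{Aut}_M(X)$: same group with basic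 neighbourhoods $\{g:d(g(x),f(x))<r\ \forall x\in A\}$, $A$ finite, $r\in\mathbb Q_{>0}$. $\mathrm{Aut}(\mathbb Q_{\ge0})$: order automorphisms with pointwise convergence topology. *)

theory Defs
  imports "HOL-Analysis.Analysis" "HOL-Algebra.Group"
begin

text \<open>Points of the spaces: functions rat => a which are 0 on non-positive rationals
  (so they represent functions on the positive rationals) and take values in S on positive rationals.\<close>

definition supp :: "(rat \<Rightarrow> 'a::zero) \<Rightarrow> rat set" where
  "supp f = {x. 0 < x \<and> f x \<noteq> 0}"

definition Sfun :: "'a::zero set \<Rightarrow> (rat \<Rightarrow> 'a) set" where
  "Sfun S = {f. (\<forall>r. 0 < r \<longrightarrow> f r \<in> S) \<and> (\<forall>r. r \<le> 0 \<longrightarrow> f r = 0)}"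

definition V :: "'a::zero set \<Rightarrow> (rat \<Rightarrow> 'a) set" where
  "V S = {f \<in> Sfun S. finite (supp f)}"

definition Vbar :: "'a::zero set \<Rightarrow> (rat \<Rightarrow> 'a) set" where
  "Vbar S = {f \<in> Sfun S. finite (supp f) \<or>
     (\<exists>a::nat \<Rightarrow> rat. (\<forall>n. a (Suc n) < a n) \<and> range a = supp f \<and>
        (\<lambda>n. real_of_rat (a n)) \<longlonglongrightarrow> 0)}"

definition Vhat :: "'a::zero set \<Rightarrow> (rat \<Rightarrow> 'a) set" where
  "Vhat S = {f \<in> Sfun S. finite (supp f) \<or>
     (\<exists>a::nat \<Rightarrow> rat. (\<forall>n. a (Suc n) < a n) \<and> range a = supp f)}"

text \<open>double closure: support conversely well-ordered (the reverse order on it is well-founded).\<close>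
definition Vbb :: "'a::zero set \<Rightarrow> (rat \<Rightarrow> 'a) set" where
  "Vbb S = {f \<in> Sfun S. wf {(x, y). x \<in> supp f \<and> y \<in> supp f \<and> y < x}}"

definition vdist :: "(rat \<Rightarrow> 'a) \<Rightarrow> (rat \<Rightarrow> 'a) \<Rightarrow> rat" where
  "vdist f g = (if f = g then 0 else (GREATEST r. 0 < r \<and> f r \<noteq> g r))"

definition autQ :: "(rat \<Rightarrow> rat) set" where
  "autQ = {D. bij_betw D {0..} {0..} \<and> strict_mono_on {0..} D \<and> (\<forall>x<0. D x = x)}"

definition dcAut :: "(rat \<Rightarrow> 'a) set \<Rightarrow> (((rat \<Rightarrow> 'a) \<Rightarrow> (rat \<Rightarrow> 'a)) \<times> (rat \<Rightarrow> rat)) set" where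
  "dcAut X = {(f, D). bij_betw f X X \<and> (\<forall>x. x \<notin> X \<longrightarrow> f x = x) \<and> D \<in> autQ \<and>
     (\<forall>x\<in>X. \<forall>y\<in>X. vdist (f x) (f y) = D (vdist x y))}"

definition autQ_group :: "(rat \<Rightarrow> rat) monoid" where
  "autQ_group = \<lparr>carrier = autQ, mult = (\<circ>), one = id\<rparr>"

definition dcAut_group :: "(rat \<Rightarrow> 'a) set \<Rightarrow>
    (((rat \<Rightarrow> 'a) \<Rightarrow> (rat \<Rightarrow> 'a)) \<times> (rat \<Rightarrow> rat)) monoid" where
  "dcAut_group X = \<lparr>carrier = dcAut X, mult = (\<lambda>p q. (fst p \<circ> fst q, snd p \<circ> snd q)), one = (id, id)\<rparr>"

definition autQ_top :: "(rat \<Rightarrow> rat) topology" where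
  "autQ_top = topology_generated_by
     {{\<psi> \<in> autQ. \<forall>a\<in>A. \<psi> a = \<phi> a} | \<phi> A. \<phi> \<in> autQ \<and> finite A \<and> A \<subseteq> {0..}}"

definition dcAut_top :: "(rat \<Rightarrow> 'a) set \<Rightarrow>
    (((rat \<Rightarrow> 'a) \<Rightarrow> (rat \<Rightarrow> 'a)) \<times> (rat \<Rightarrow> rat)) topology" where
  "dcAut_top X = topology_generated_by
     {{g \<in> dcAut X. (\<forall>x\<in>P. fst g x = fst h x) \<and> (\<forall>r\<in>R. snd g r = snd h r)} | h P R.
        h \<in> dcAut X \<and> finite P \<and> P \<subseteq> X \<and> finite R \<and> R \<subseteq> {0..}}"

definition dcAut_M_top :: "(rat \<Rightarrow> 'a) set \<Rightarrow>
    (((rat \<Rightarrow> 'a) \<Rightarrow> (rat \<Rightarrow> 'a)) \<times> (rat \<Rightarrow> rat)) topology" where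
  "dcAut_M_top X = topology_generated_by
     {{g \<in> dcAut X. \<forall>x\<in>A. vdist (fst g x) (fst h x) < r} | h A r.
        h \<in> dcAut X \<and> finite A \<and> A \<subseteq> X \<and> 0 < r}"

definition is_section :: "(rat \<Rightarrow> 'a) set \<Rightarrow>
    ((rat \<Rightarrow> rat) \<Rightarrow> ((rat \<Rightarrow> 'a) \<Rightarrow> (rat \<Rightarrow> 'a)) \<times> (rat \<Rightarrow> rat)) \<Rightarrow> bool" where
  "is_section X s \<longleftrightarrow> s \<in> hom autQ_group (dcAut_group X) \<and> (\<forall>\<phi>\<in>autQ. snd (s \<phi>) = \<phi>)"

end

theory Submission
  imports Defs
begin


lemma autQ_D:
  assumes "\<phi> \<in> autQ"
  shows "strict_mono \<phi>" "surj \<phi>" "\<phi> 0 = 0" "\<forall>x<0. \<phi> x = x"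
proof -
  have b: "bij_betw \<phi> {0..} {0..}" and sm: "strict_mono_on {0..} \<phi>" and n: "\<forall>x<0. \<phi> x = x"
    using assms by (auto simp: autQ_def)
  show "\<forall>x<0. \<phi> x = x" by (fact n)
  have nn: "\<phi> x \<ge> 0" if "x \<ge> 0" for x using b that by (auto simp: bij_betw_def)
  show sm2: "strict_mono \<phi>"
  proof (rule strict_monoI)
    fix x y :: rat assume "x < y"
    show "\<phi> x < \<phi> y"
    proof (cases "x \<ge> 0")
      case True then show ?thesis using sm \<open>x<y\<close> by (auto simp: strict_mono_on_def)
    next
      case False
      then show ?thesis using n nn[of y] \<open>x<y\<close> by (cases "y \<ge> 0") auto
    qed
  qed
  show "surj \<phi>"
  proof -
    { fix y :: rat
      have "y \<in> range \<phi>"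
      proof (cases "y \<ge> 0")
        case True then have "y \<in> \<phi> ` {0..}" using b by (auto simp: bij_betw_def)
        then show ?thesis by auto
      next
        case False then show ?thesis using n by (metis not_le rangeI)
      qed }
    then show ?thesis by auto
  qed
  obtain a where a: "a \<ge> 0" "\<phi> a = 0" using b by (force simp: bij_betw_def)
  show "\<phi> 0 = 0"
  proof (cases "a = 0")
    case True then show ?thesis using a by simp
  next
    case False then have "0 < a" using a by simp
    then have "\<phi> 0 < \<phi> a" using sm2 by (simp add: strict_mono_less)
    then show ?thesis using nn[of 0] a by simp
  qed
qed

lemma autQ_I:
  assumes sm: "strict_mono \<phi>" and su: "surj \<phi>" and n: "\<forall>x<(0::rat). \<phi> x = x"
  shows "\<phi> \<in> autQ"
proof -
  have z: "\<phi> 0 = 0"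
  proof -
    have ge: "\<phi> 0 \<ge> 0"
    proof (rule ccontr)
      assume "\<not> \<phi> 0 \<ge> 0"
      then have "\<phi> (\<phi> 0) = \<phi> 0" using n by auto
      then have "\<phi> 0 = 0" using strict_mono_eq[OF sm] by blast
      then show False using \<open>\<not> \<phi> 0 \<ge> 0\<close> by simp
    qed
    obtain a where a: "\<phi> a = 0" using su by (metis surjD)
    have "a = 0"
    proof (rule ccontr)
      assume "a \<noteq> 0"
      then consider "a < 0" | "a > 0" by linarith
      then show False
      proof cases
        case 1 then show ?thesis using n a by auto
      next
        case 2 then have "\<phi> 0 < \<phi> a" using sm by (simp add: strict_mono_less)
        then show ?thesis using ge a by simp
      qed
    qed
    then show ?thesis using a by simp
  qed
  have pos: "\<phi> x \<ge> 0 \<longleftrightarrow> x \<ge> 0" for x using z strict_mono_less_eq[OF sm, of 0 x] by simp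
  have "bij_betw \<phi> {0..} {0..}"
    unfolding bij_betw_def
  proof
    show "inj_on \<phi> {0..}" using strict_mono_imp_inj_on[OF sm] by (simp add: inj_on_def)
    show "\<phi> ` {0..} = {0..}"
    proof
      show "\<phi> ` {0..} \<subseteq> {0..}" using pos by auto
      show "{0..} \<subseteq> \<phi> ` {0..}"
      proof
        fix y :: rat assume "y \<in> {0..}"
        obtain x where "y = \<phi> x" using su by (metis surjD)
        then show "y \<in> \<phi> ` {0..}" using pos \<open>y \<in> {0..}\<close> by auto
      qed
    qed
  qed
  moreover have "strict_mono_on {0..} \<phi>" using sm by (simp add: strict_mono_on_def strict_mono_def)
  ultimately show ?thesis using n by (simp add: autQ_def)
qed

lemma autQ_bij: "\<phi> \<in> autQ \<Longrightarrow> bij \<phi>"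
  using autQ_D by (metis bij_def strict_mono_imp_inj_on inj_on_def)

lemma autQ_inv: assumes "\<phi> \<in> autQ" shows "inv_into UNIV \<phi> \<in> autQ"
proof -
  note d = autQ_D[OF assms]
  have b: "bij \<phi>" using autQ_bij[OF assms] .
  have sm: "strict_mono (inv_into UNIV \<phi>)"
  proof (rule strict_monoI)
    fix x y :: rat assume "x < y"
    show "inv_into UNIV \<phi> x < inv_into UNIV \<phi> y"
    proof (rule ccontr)
      assume "\<not> inv_into UNIV \<phi> x < inv_into UNIV \<phi> y"
      then have "\<phi> (inv_into UNIV \<phi> y) \<le> \<phi> (inv_into UNIV \<phi> x)" using strict_mono_less_eq[OF d(1)] by simp
      then show False using \<open>x<y\<close> surj_f_inv_f[OF d(2)] by simp
    qed
  qed
  have "surj (inv_into UNIV \<phi>)" using b by (simp add: bij_imp_bij_inv bij_is_surj)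
  moreover have "\<forall>x<0. inv_into UNIV \<phi> x = x" using d(4) b by (metis bij_inv_eq_iff)
  ultimately show ?thesis using sm autQ_I by blast
qed

lemma autQ_comp: assumes "\<phi> \<in> autQ" "\<psi> \<in> autQ" shows "\<phi> \<circ> \<psi> \<in> autQ"
proof -
  note a = autQ_D[OF assms(1)] and b = autQ_D[OF assms(2)]
  have "strict_mono (\<phi> \<circ> \<psi>)" using a(1) b(1) by (simp add: strict_mono_def)
  moreover have "surj (\<phi> \<circ> \<psi>)" using comp_surj[OF b(2) a(2)] .
  moreover have "\<forall>x<0. (\<phi> \<circ> \<psi>) x = x" using a(4) b(4) by simp
  ultimately show ?thesis using autQ_I by blast
qed

lemma autQ_pos: "\<phi> \<in> autQ \<Longrightarrow> 0 < \<phi> x \<longleftrightarrow> 0 < x"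
  using autQ_D[of \<phi>] strict_mono_less[of \<phi> 0 x] by auto

lemma autQ_le: "\<phi> \<in> autQ \<Longrightarrow> \<phi> x \<le> \<phi> y \<longleftrightarrow> x \<le> y"
  using autQ_D[of \<phi>] strict_mono_less_eq by blast

lemma autQ_less: "\<phi> \<in> autQ \<Longrightarrow> \<phi> x < \<phi> y \<longleftrightarrow> x < y"
  using autQ_D[of \<phi>] strict_mono_less by blast

lemma autQ_inv_f: "\<phi> \<in> autQ \<Longrightarrow> inv_into UNIV \<phi> (\<phi> x) = x"
  using autQ_bij by (simp add: bij_is_inj)

lemma autQ_f_inv: "\<phi> \<in> autQ \<Longrightarrow> \<phi> (inv_into UNIV \<phi> x) = x"
  using autQ_bij by (simp add: bij_is_surj surj_f_inv_f)



definition cwo :: "rat set \<Rightarrow> bool" where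
  "cwo A \<longleftrightarrow> (\<forall>B\<subseteq>A. B \<noteq> {} \<longrightarrow> (\<exists>m\<in>B. \<forall>y\<in>B. y \<le> m))"

lemma cwo_finite: assumes "finite A" shows "cwo A"
  unfolding cwo_def
proof (intro allI impI)
  fix B assume B: "B \<subseteq> A" "B \<noteq> {}"
  then have "finite B" using assms finite_subset by blast
  then show "\<exists>m\<in>B. \<forall>y\<in>B. y \<le> m" using B(2) Max_in Max_ge by blast
qed

lemma cwo_seq: assumes "\<forall>n. a (Suc n) < (a n :: rat)" shows "cwo (range a)"
  unfolding cwo_def
proof (intro allI impI)
  fix B assume B: "B \<subseteq> range a" "B \<noteq> {}"
  have ds: "decseq a" using assms by (intro decseq_SucI) (simp add: less_imp_le)
  obtain x where "x \<in> B" using B by auto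
  then obtain k where "a k \<in> B" using B by auto
  define n where "n = (LEAST n. a n \<in> B)"
  have n: "a n \<in> B" unfolding n_def by (rule LeastI, fact)
  show "\<exists>m\<in>B. \<forall>y\<in>B. y \<le> m"
  proof (intro bexI[OF _ n] ballI)
    fix y assume "y \<in> B"
    then obtain j where j: "y = a j" using B by auto
    then have "n \<le> j" unfolding n_def using \<open>y \<in> B\<close> by (simp add: Least_le)
    then show "y \<le> a n" using ds j by (simp add: decseqD)
  qed
qed

lemma cwo_Un: assumes "cwo A" "cwo C" shows "cwo (A \<union> C)"
  unfolding cwo_def
proof (intro allI impI)
  fix B assume B: "B \<subseteq> A \<union> C" "B \<noteq> {}"
  show "\<exists>m\<in>B. \<forall>y\<in>B. y \<le> m"
  proof (cases "B \<inter> A = {}")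
    case True then have "B \<subseteq> C" using B by auto
    then show ?thesis using assms(2) B unfolding cwo_def by blast
  next
    case F1: False
    obtain m1 where m1: "m1 \<in> B \<inter> A" "\<forall>y\<in>B \<inter> A. y \<le> m1" using assms(1) F1 unfolding cwo_def
      by (metis Int_lower2)
    show ?thesis
    proof (cases "B \<inter> C = {}")
      case True then have "B \<subseteq> A" using B by auto
      then show ?thesis using assms(1) B unfolding cwo_def by blast
    next
      case False
      obtain m2 where m2: "m2 \<in> B \<inter> C" "\<forall>y\<in>B \<inter> C. y \<le> m2" using assms(2) False unfolding cwo_def
        by (metis Int_lower2)
      show ?thesis
      proof (intro bexI[of _ "max m1 m2"] ballI)
        fix y assume "y \<in> B" then have "y \<in> A \<or> y \<in> C" using B by auto
        then show "y \<le> max m1 m2" using m1 m2 \<open>y \<in> B\<close> by (auto simp: le_max_iff_disj)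
      next
        show "max m1 m2 \<in> B" using m1 m2 by (simp add: max_def)
      qed
    qed
  qed
qed

lemma cwo_wf: "cwo A \<longleftrightarrow> wf {(x, y). x \<in> A \<and> y \<in> A \<and> y < x}"
proof
  assume c: "cwo A"
  show "wf {(x, y). x \<in> A \<and> y \<in> A \<and> y < x}"
    unfolding wf_eq_minimal
  proof (intro allI impI)
    fix Q :: "rat set" and x assume "x \<in> Q"
    show "\<exists>z\<in>Q. \<forall>y. (y, z) \<in> {(x, y). x \<in> A \<and> y \<in> A \<and> y < x} \<longrightarrow> y \<notin> Q"
    proof (cases "Q \<inter> A = {}")
      case True then show ?thesis using \<open>x \<in> Q\<close> by blast
    next
      case False
      then obtain m where m: "m \<in> Q \<inter> A" "\<forall>y\<in>Q \<inter> A. y \<le> m" using c unfolding cwo_def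
        by (metis Int_lower2)
      show ?thesis
      proof (intro bexI[of _ m] allI impI)
        show "m \<in> Q" using m by simp
        fix y assume "(y, m) \<in> {(x, y). x \<in> A \<and> y \<in> A \<and> y < x}"
        then have "y \<in> A" "m < y" by auto
        then show "y \<notin> Q" using m(2) by (meson IntI not_le)
      qed
    qed
  qed
next
  assume w: "wf {(x, y). x \<in> A \<and> y \<in> A \<and> y < x}"
  show "cwo A" unfolding cwo_def
  proof (intro allI impI)
    fix B assume B: "B \<subseteq> A" "B \<noteq> {}"
    then obtain x where "x \<in> B" by auto
    then obtain z where z: "z \<in> B" "\<forall>y. (y, z) \<in> {(x, y). x \<in> A \<and> y \<in> A \<and> y < x} \<longrightarrow> y \<notin> B"
      using w[unfolded wf_eq_minimal, rule_format, OF \<open>x \<in> B\<close>] by blast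
    show "\<exists>m\<in>B. \<forall>y\<in>B. y \<le> m"
    proof (intro bexI[of _ z] ballI)
      show "z \<in> B" by (fact z(1))
      fix y assume y: "y \<in> B"
      show "y \<le> z"
      proof (rule ccontr)
        assume "\<not> y \<le> z"
        then have "(y, z) \<in> {(x, y). x \<in> A \<and> y \<in> A \<and> y < x}" using y z(1) B(1) by auto
        then show False using z(2) y by blast
      qed
    qed
  qed
qed

lemma cwo_image: assumes "cwo A" "\<phi> \<in> autQ" shows "cwo (\<phi> ` A)"
  unfolding cwo_def
proof (intro allI impI)
  fix B assume B: "B \<subseteq> \<phi> ` A" "B \<noteq> {}"
  have "inv_into UNIV \<phi> ` B \<subseteq> A" using B autQ_inv_f[OF assms(2)] by auto
  moreover have "inv_into UNIV \<phi> ` B \<noteq> {}" using B by auto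
  ultimately obtain m where m: "m \<in> inv_into UNIV \<phi> ` B" "\<forall>y\<in>inv_into UNIV \<phi> ` B. y \<le> m"
    using assms(1) unfolding cwo_def by metis
  show "\<exists>m\<in>B. \<forall>y\<in>B. y \<le> m"
  proof (intro bexI[of _ "\<phi> m"] ballI)
    show "\<phi> m \<in> B" using m autQ_f_inv[OF assms(2)] by auto
    fix y assume "y \<in> B"
    then have "inv_into UNIV \<phi> y \<le> m" using m by auto
    then show "y \<le> \<phi> m" using autQ_le[OF assms(2)] autQ_f_inv[OF assms(2)] by metis
  qed
qed

lemma supp_comp: assumes "\<phi> \<in> autQ" shows "supp (f \<circ> inv_into UNIV \<phi>) = \<phi> ` supp f"
proof -
  have i: "inv_into UNIV \<phi> \<in> autQ" by (rule autQ_inv[OF assms])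
  show ?thesis
  proof
    show "supp (f \<circ> inv_into UNIV \<phi>) \<subseteq> \<phi> ` supp f"
    proof
      fix r assume "r \<in> supp (f \<circ> inv_into UNIV \<phi>)"
      then have "inv_into UNIV \<phi> r \<in> supp f" using autQ_pos[OF i] by (auto simp: supp_def)
      then show "r \<in> \<phi> ` supp f" using autQ_f_inv[OF assms] by (metis imageI)
    qed
    show "\<phi> ` supp f \<subseteq> supp (f \<circ> inv_into UNIV \<phi>)"
      using autQ_inv_f[OF assms] autQ_pos[OF assms] by (auto simp: supp_def)
  qed
qed

lemma Sfun_comp: assumes "\<phi> \<in> autQ" "f \<in> Sfun S" shows "f \<circ> inv_into UNIV \<phi> \<in> Sfun S"
proof -
  have i: "inv_into UNIV \<phi> \<in> autQ" by (rule autQ_inv[OF assms(1)])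
  show ?thesis using assms(2) autQ_pos[OF i] by (auto simp: Sfun_def not_less[symmetric])
qed

lemma V_cwo: "f \<in> V S \<Longrightarrow> cwo (supp f)" by (simp add: V_def cwo_finite)
lemma Vhat_cwo: assumes "f \<in> Vhat S" shows "cwo (supp f)"
proof -
  have "finite (supp f) \<or> (\<exists>a::nat \<Rightarrow> rat. (\<forall>n. a (Suc n) < a n) \<and> range a = supp f)"
    using assms by (simp add: Vhat_def)
  then show ?thesis using cwo_finite cwo_seq by metis
qed
lemma Vbar_cwo: assumes "f \<in> Vbar S" shows "cwo (supp f)"
proof -
  have "finite (supp f) \<or> (\<exists>a::nat \<Rightarrow> rat. (\<forall>n. a (Suc n) < a n) \<and> range a = supp f)"
    using assms by (auto simp: Vbar_def)
  then show ?thesis using cwo_finite cwo_seq by metis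
qed
lemma Vbb_cwo: "f \<in> Vbb S \<Longrightarrow> cwo (supp f)" by (simp add: Vbb_def cwo_wf)

lemma V_comp: "\<phi> \<in> autQ \<Longrightarrow> f \<in> V S \<Longrightarrow> f \<circ> inv_into UNIV \<phi> \<in> V S"
  by (simp add: V_def Sfun_comp supp_comp)

lemma Vbb_comp: "\<phi> \<in> autQ \<Longrightarrow> f \<in> Vbb S \<Longrightarrow> f \<circ> inv_into UNIV \<phi> \<in> Vbb S"
  by (simp add: Vbb_def Sfun_comp supp_comp cwo_wf[symmetric] cwo_image)

lemma Vhat_comp: assumes "\<phi> \<in> autQ" "f \<in> Vhat S" shows "f \<circ> inv_into UNIV \<phi> \<in> Vhat S"
proof -
  have "finite (supp (f \<circ> inv_into UNIV \<phi>)) \<or>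
     (\<exists>a::nat \<Rightarrow> rat. (\<forall>n. a (Suc n) < a n) \<and> range a = supp (f \<circ> inv_into UNIV \<phi>))"
  proof (cases "finite (supp f)")
    case True then show ?thesis using supp_comp[OF assms(1), of f] by (metis finite_imageI)
  next
    case False
    then obtain a where a: "\<forall>n. a (Suc n) < a n" "range a = supp f" using assms(2) by (auto simp: Vhat_def)
    have "\<forall>n. (\<phi> \<circ> a) (Suc n) < (\<phi> \<circ> a) n" using a(1) autQ_less[OF assms(1)] by simp
    moreover have "range (\<phi> \<circ> a) = supp (f \<circ> inv_into UNIV \<phi>)"
    proof -
      have "range (\<phi> \<circ> a) = \<phi> ` range a" by (rule image_comp[symmetric])
      also have "\<dots> = \<phi> ` supp f" using a(2) by simp
      also have "\<dots> = supp (f \<circ> inv_into UNIV \<phi>)" by (rule supp_comp[OF assms(1), symmetric])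
      finally show ?thesis .
    qed
    ultimately show ?thesis by blast
  qed
  then show ?thesis using assms by (simp add: Vhat_def Sfun_comp)
qed

lemma Vbar_comp: assumes "\<phi> \<in> autQ" "f \<in> Vbar S" shows "f \<circ> inv_into UNIV \<phi> \<in> Vbar S"
proof -
  have "finite (supp (f \<circ> inv_into UNIV \<phi>)) \<or>
     (\<exists>a::nat \<Rightarrow> rat. (\<forall>n. a (Suc n) < a n) \<and> range a = supp (f \<circ> inv_into UNIV \<phi>) \<and>
        (\<lambda>n. real_of_rat (a n)) \<longlonglongrightarrow> 0)"
  proof (cases "finite (supp f)")
    case True then show ?thesis using supp_comp[OF assms(1), of f] by (metis finite_imageI)
  next
    case False
    then obtain a where a: "\<forall>n. a (Suc n) < a n" "range a = supp f" "(\<lambda>n. real_of_rat (a n)) \<longlonglongrightarrow> 0"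
      using assms(2) by (auto simp: Vbar_def)
    have "\<forall>n. (\<phi> \<circ> a) (Suc n) < (\<phi> \<circ> a) n" using a(1) autQ_less[OF assms(1)] by simp
    moreover have "range (\<phi> \<circ> a) = supp (f \<circ> inv_into UNIV \<phi>)"
    proof -
      have "range (\<phi> \<circ> a) = \<phi> ` range a" by (rule image_comp[symmetric])
      also have "\<dots> = \<phi> ` supp f" using a(2) by simp
      also have "\<dots> = supp (f \<circ> inv_into UNIV \<phi>)" by (rule supp_comp[OF assms(1), symmetric])
      finally show ?thesis .
    qed
    moreover have "(\<lambda>n. real_of_rat ((\<phi> \<circ> a) n)) \<longlonglongrightarrow> 0"
      unfolding LIMSEQ_iff
    proof (intro allI impI)
      fix e :: real assume "0 < e"
      then obtain q :: rat where q: "(0::real) < of_rat q" "of_rat q < e" using of_rat_dense[of 0 e] by blast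
      have i: "inv_into UNIV \<phi> \<in> autQ" by (rule autQ_inv[OF assms(1)])
      define c where "c = inv_into UNIV \<phi> q"
      have "0 < q" using q by simp
      then have "0 < c" unfolding c_def using autQ_pos[OF i] by simp
      then have "0 < real_of_rat c" by simp
      from a(3)[unfolded LIMSEQ_iff, rule_format, OF this]
      obtain N where N: "\<forall>n\<ge>N. norm (real_of_rat (a n) - 0) < real_of_rat c" by blast
      show "\<exists>no. \<forall>n\<ge>no. norm (real_of_rat ((\<phi> \<circ> a) n) - 0) < e"
      proof (intro exI allI impI)
        fix n assume "N \<le> n"
        then have "norm (real_of_rat (a n) - 0) < real_of_rat c" using N by blast
        then have "real_of_rat \<bar>a n\<bar> < real_of_rat c" by simp
        then have "\<bar>a n\<bar> < c" by (simp only: of_rat_less)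
        then have "a n < c" by simp
        then have "\<phi> (a n) < \<phi> c" using autQ_less[OF assms(1)] by blast
        also have "\<phi> c = q" unfolding c_def by (rule autQ_f_inv[OF assms(1)])
        finally have "\<phi> (a n) < q" .
        have "a n \<in> supp f" using a(2) by (metis rangeI)
        then have "0 < \<phi> (a n)" using autQ_pos[OF assms(1)] by (simp add: supp_def)
        show "norm (real_of_rat ((\<phi> \<circ> a) n) - 0) < e"
        proof -
          have h1: "real_of_rat (\<phi> (a n)) < real_of_rat q" using \<open>\<phi> (a n) < q\<close> by (simp add: of_rat_less)
          have h2: "0 < real_of_rat (\<phi> (a n))" using \<open>0 < \<phi> (a n)\<close> by simp
          show ?thesis using h1 h2 q by simp
        qed
      qed
    qed
    ultimately show ?thesis by blast
  qed
  then show ?thesis using assms by (simp add: Vbar_def Sfun_comp)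
qed



lemma vdist_max:
  assumes "u \<in> Sfun S" "v \<in> Sfun S" "cwo (supp u)" "cwo (supp v)" "u \<noteq> v"
  shows "0 < vdist u v \<and> u (vdist u v) \<noteq> v (vdist u v) \<and> (\<forall>y. 0 < y \<and> u y \<noteq> v y \<longrightarrow> y \<le> vdist u v)"
proof -
  define D where "D = {r. 0 < r \<and> u r \<noteq> v r}"
  have sub: "D \<subseteq> supp u \<union> supp v" unfolding D_def supp_def by auto
  obtain x where x: "u x \<noteq> v x" using assms(5) by auto
  have "x \<in> D"
  proof -
    have "\<not> x \<le> 0" using x assms(1,2) by (auto simp: Sfun_def)
    then show ?thesis using x by (simp add: D_def)
  qed
  then have "D \<noteq> {}" by auto
  then obtain m where m: "m \<in> D" "\<forall>y\<in>D. y \<le> m"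
    using cwo_Un[OF assms(3,4)] sub unfolding cwo_def by metis
  have "vdist u v = m" unfolding vdist_def using assms(5)
    by (simp, intro Greatest_equality) (use m in \<open>auto simp: D_def\<close>)
  then show ?thesis using m by (auto simp: D_def)
qed

lemma vdist_lt:
  assumes "u \<in> Sfun S" "v \<in> Sfun S" "cwo (supp u)" "cwo (supp v)" "0 < r"
  shows "vdist u v < r \<longleftrightarrow> (\<forall>t\<ge>r. u t = v t)"
proof (cases "u = v")
  case True then show ?thesis using assms(5) by (simp add: vdist_def)
next
  case False
  note M = vdist_max[OF assms(1-4) False]
  show ?thesis
  proof
    assume "vdist u v < r"
    then show "\<forall>t\<ge>r. u t = v t" using M assms(5) by (meson less_le_trans not_le)
  next
    assume "\<forall>t\<ge>r. u t = v t"
    then show "vdist u v < r" using M by (meson not_le)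
  qed
qed

lemma vdist_comp:
  assumes "\<phi> \<in> autQ" "f \<in> Sfun S" "g \<in> Sfun S" "cwo (supp f)" "cwo (supp g)"
  shows "vdist (f \<circ> inv_into UNIV \<phi>) (g \<circ> inv_into UNIV \<phi>) = \<phi> (vdist f g)"
proof (cases "f = g")
  case True then show ?thesis using autQ_D(3)[OF assms(1)] by (simp add: vdist_def)
next
  case False
  note M = vdist_max[OF assms(2-5) False]
  define m where "m = vdist f g"
  have i: "inv_into UNIV \<phi> \<in> autQ" by (rule autQ_inv[OF assms(1)])
  have ne: "f \<circ> inv_into UNIV \<phi> \<noteq> g \<circ> inv_into UNIV \<phi>"
  proof
    assume "f \<circ> inv_into UNIV \<phi> = g \<circ> inv_into UNIV \<phi>"
    then have "(f \<circ> inv_into UNIV \<phi>) (\<phi> m) = (g \<circ> inv_into UNIV \<phi>) (\<phi> m)" by simp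
    then show False using M autQ_inv_f[OF assms(1)] unfolding m_def by simp
  qed
  have "(GREATEST r. 0 < r \<and> (f \<circ> inv_into UNIV \<phi>) r \<noteq> (g \<circ> inv_into UNIV \<phi>) r) = \<phi> m"
  proof (rule Greatest_equality)
    show "0 < \<phi> m \<and> (f \<circ> inv_into UNIV \<phi>) (\<phi> m) \<noteq> (g \<circ> inv_into UNIV \<phi>) (\<phi> m)"
      using M autQ_inv_f[OF assms(1)] autQ_pos[OF assms(1)] unfolding m_def by simp
    fix y assume y: "0 < y \<and> (f \<circ> inv_into UNIV \<phi>) y \<noteq> (g \<circ> inv_into UNIV \<phi>) y"
    then have "0 < inv_into UNIV \<phi> y" using autQ_pos[OF i] by simp
    then have "inv_into UNIV \<phi> y \<le> m" using M y unfolding m_def by simp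
    then have "\<phi> (inv_into UNIV \<phi> y) \<le> \<phi> m" using autQ_le[OF assms(1)] by blast
    then show "y \<le> \<phi> m" using autQ_f_inv[OF assms(1)] by simp
  qed
  then show ?thesis using ne unfolding vdist_def m_def by simp
qed

definition sec :: "(rat \<Rightarrow> 'a) set \<Rightarrow> (rat \<Rightarrow> rat) \<Rightarrow> ((rat \<Rightarrow> 'a) \<Rightarrow> (rat \<Rightarrow> 'a)) \<times> (rat \<Rightarrow> rat)" where
  "sec X \<phi> = (\<lambda>f. if f \<in> X then f \<circ> inv_into UNIV \<phi> else f, \<phi>)"

locale goodX =
  fixes X :: "(rat \<Rightarrow> 'a::zero) set" and S :: "'a set"
  assumes XS: "X \<subseteq> Sfun S"
    and Xc: "\<And>f. f \<in> X \<Longrightarrow> cwo (supp f)"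
    and Xcomp: "\<And>\<phi> f. \<phi> \<in> autQ \<Longrightarrow> f \<in> X \<Longrightarrow> f \<circ> inv_into UNIV \<phi> \<in> X"
begin

lemma sec_in: assumes "\<phi> \<in> autQ" shows "sec X \<phi> \<in> dcAut X"
proof -
  have i: "inv_into UNIV \<phi> \<in> autQ" by (rule autQ_inv[OF assms])
  have ii: "inv_into UNIV (inv_into UNIV \<phi>) = \<phi>" using autQ_bij[OF assms] by (simp add: inv_inv_eq)
  have c1: "inv_into UNIV \<phi> \<circ> \<phi> = id" using autQ_inv_f[OF assms] by (simp add: fun_eq_iff)
  have c2: "\<phi> \<circ> inv_into UNIV \<phi> = id" using autQ_f_inv[OF assms] by (simp add: fun_eq_iff)
  have b: "bij_betw (\<lambda>f. if f \<in> X then f \<circ> inv_into UNIV \<phi> else f) X X"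
  proof (rule bij_betwI[where g = "\<lambda>f. f \<circ> \<phi>"])
    show "(\<lambda>f. if f \<in> X then f \<circ> inv_into UNIV \<phi> else f) \<in> X \<rightarrow> X" using Xcomp[OF assms] by auto
    show "(\<lambda>f. f \<circ> \<phi>) \<in> X \<rightarrow> X" using Xcomp[OF i] ii by auto
    fix x assume "x \<in> X"
    then show "(if x \<in> X then x \<circ> inv_into UNIV \<phi> else x) \<circ> \<phi> = x" using c1 by (simp add: o_assoc[symmetric])
  next
    fix y assume "y \<in> X"
    then have "y \<circ> \<phi> \<in> X" using Xcomp[OF i] ii by auto
    then show "(if y \<circ> \<phi> \<in> X then y \<circ> \<phi> \<circ> inv_into UNIV \<phi> else y \<circ> \<phi>) = y" using c2 by (simp add: o_assoc[symmetric])
  qed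
  have d: "\<forall>x\<in>X. \<forall>y\<in>X. vdist (fst (sec X \<phi>) x) (fst (sec X \<phi>) y) = \<phi> (vdist x y)"
  proof (intro ballI)
    fix x y assume xy: "x \<in> X" "y \<in> X"
    show "vdist (fst (sec X \<phi>) x) (fst (sec X \<phi>) y) = \<phi> (vdist x y)"
      using vdist_comp[OF assms subsetD[OF XS xy(1)] subsetD[OF XS xy(2)] Xc[OF xy(1)] Xc[OF xy(2)]] xy
      by (simp add: sec_def)
  qed
  show ?thesis using b d assms unfolding dcAut_def by (auto simp: sec_def)
qed

lemma sec_hom: "is_section X (sec X)"
proof -
  have "sec X \<in> hom autQ_group (dcAut_group X)"
  proof (rule homI)
    fix \<phi> assume "\<phi> \<in> carrier autQ_group"
    then show "sec X \<phi> \<in> carrier (dcAut_group X)" using sec_in by (simp add: autQ_group_def dcAut_group_def)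
  next
    fix \<phi> \<psi> assume a: "\<phi> \<in> carrier autQ_group" "\<psi> \<in> carrier autQ_group"
    then have a1: "\<phi> \<in> autQ" "\<psi> \<in> autQ" by (auto simp: autQ_group_def)
    have inv: "inv_into UNIV (\<phi> \<circ> \<psi>) = inv_into UNIV \<psi> \<circ> inv_into UNIV \<phi>"
      using o_inv_distrib[OF autQ_bij[OF a1(1)] autQ_bij[OF a1(2)]] .
    have "(\<lambda>f. if f \<in> X then f \<circ> inv_into UNIV (\<phi> \<circ> \<psi>) else f) =
       (\<lambda>f. if f \<in> X then f \<circ> inv_into UNIV \<phi> else f) \<circ> (\<lambda>f. if f \<in> X then f \<circ> inv_into UNIV \<psi> else f)"
    proof
      fix f show "(if f \<in> X then f \<circ> inv_into UNIV (\<phi> \<circ> \<psi>) else f) =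
        ((\<lambda>f. if f \<in> X then f \<circ> inv_into UNIV \<phi> else f) \<circ> (\<lambda>f. if f \<in> X then f \<circ> inv_into UNIV \<psi> else f)) f"
        using Xcomp[OF a1(2), of f] inv by (auto simp: o_assoc)
    qed
    then show "sec X (\<phi> \<otimes>\<^bsub>autQ_group\<^esub> \<psi>) = sec X \<phi> \<otimes>\<^bsub>dcAut_group X\<^esub> sec X \<psi>"
      by (simp add: autQ_group_def dcAut_group_def sec_def)
  qed
  then show ?thesis by (simp add: is_section_def sec_def)
qed

end



lemma comp_agree:
  assumes "\<phi> \<in> autQ" "\<psi> \<in> autQ" "x \<in> Sfun S"
    and ag: "\<And>a. a \<in> supp x \<Longrightarrow> \<psi> a = t \<or> \<phi> a = t \<Longrightarrow> \<psi> a = \<phi> a"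
  shows "(x \<circ> inv_into UNIV \<psi>) t = (x \<circ> inv_into UNIV \<phi>) t"
proof -
  define a where "a = inv_into UNIV \<psi> t"
  define b where "b = inv_into UNIV \<phi> t"
  have pa: "\<psi> a = t" unfolding a_def by (rule autQ_f_inv[OF assms(2)])
  have pb: "\<phi> b = t" unfolding b_def by (rule autQ_f_inv[OF assms(1)])
  have z: "x y \<noteq> 0 \<Longrightarrow> y \<in> supp x" for y using assms(3) by (force simp: Sfun_def supp_def not_less[symmetric])
  have "x a = x b"
  proof (cases "x a \<noteq> 0")
    case True
    then have "\<phi> a = t" using ag[OF z[OF True]] pa by simp
    then have "a = b" using pb autQ_bij[OF assms(1)] by (metis bij_pointE)
    then show ?thesis by simp
  next
    case F: False
    show ?thesis
    proof (cases "x b \<noteq> 0")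
      case True
      then have "\<psi> b = t" using ag[OF z[OF True]] pb by simp
      then have "a = b" using pa autQ_bij[OF assms(2)] by (metis bij_pointE)
      then show ?thesis by simp
    next
      case False then show ?thesis using F by simp
    qed
  qed
  then show ?thesis by (simp add: a_def b_def)
qed

lemma topspace_autQ: "topspace autQ_top = autQ"
proof -
  have "id \<in> autQ" by (rule autQ_I) (auto simp: strict_mono_def)
  then show ?thesis unfolding autQ_top_def topology_generated_by_topspace by blast
qed

lemma Vbar_fin: assumes "x \<in> Vbar S" "0 < c" shows "finite {a\<in>supp x. c \<le> a}"
proof (cases "finite (supp x)")
  case True then show ?thesis by simp
next
  case False
  then obtain s where s: "range s = supp x" "(\<lambda>n. real_of_rat (s n)) \<longlonglongrightarrow> 0"
    using assms(1) by (auto simp: Vbar_def)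
  have "0 < real_of_rat c" using assms(2) by simp
  from s(2)[unfolded LIMSEQ_iff, rule_format, OF this]
  obtain N where N: "\<forall>n\<ge>N. norm (real_of_rat (s n) - 0) < real_of_rat c" by blast
  have "{a\<in>supp x. c \<le> a} \<subseteq> s ` {..<N}"
  proof
    fix a assume a: "a \<in> {a\<in>supp x. c \<le> a}"
    then obtain n where n: "a = s n" using s(1) by (metis (no_types, lifting) imageE mem_Collect_eq)
    have "\<not> N \<le> n"
    proof
      assume "N \<le> n"
      then have "norm (real_of_rat (s n) - 0) < real_of_rat c" using N by blast
      then have "real_of_rat \<bar>s n\<bar> < real_of_rat c" by simp
      then have "\<bar>s n\<bar> < c" by (simp only: of_rat_less)
      then show False using a n abs_ge_self[of "s n"] by auto
    qed
    then show "a \<in> s ` {..<N}" using n by simp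
  qed
  then show ?thesis using finite_subset by blast
qed

context goodX begin

lemma fst_h_in: "h \<in> dcAut X \<Longrightarrow> x \<in> X \<Longrightarrow> fst h x \<in> X"
  by (auto simp: dcAut_def bij_betw_def)

lemma cont_pointwise:
  assumes fin: "\<And>x. x \<in> X \<Longrightarrow> finite (supp x)"
  shows "continuous_map autQ_top (dcAut_top X) (sec X)"
  unfolding dcAut_top_def
proof (rule continuous_on_generated_topo)
  show "sec X ` topspace autQ_top \<subseteq>
    \<Union> {{g \<in> dcAut X. (\<forall>x\<in>P. fst g x = fst h x) \<and> (\<forall>r\<in>R. snd g r = snd h r)} | h P R.
        h \<in> dcAut X \<and> finite P \<and> P \<subseteq> X \<and> finite R \<and> R \<subseteq> {0..}}"
  proof
    fix g assume "g \<in> sec X ` topspace autQ_top"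
    then have g: "g \<in> dcAut X" using sec_in topspace_autQ by auto
    then show "g \<in> \<Union> {{g \<in> dcAut X. (\<forall>x\<in>P. fst g x = fst h x) \<and> (\<forall>r\<in>R. snd g r = snd h r)} | h P R.
        h \<in> dcAut X \<and> finite P \<and> P \<subseteq> X \<and> finite R \<and> R \<subseteq> {0..}}"
      by (intro UnionI[of "{g \<in> dcAut X. (\<forall>x\<in>{}. fst g x = fst g x) \<and> (\<forall>r\<in>{}. snd g r = snd g r)}"]) blast+
  qed
next
  fix U assume "U \<in> {{g \<in> dcAut X. (\<forall>x\<in>P. fst g x = fst h x) \<and> (\<forall>r\<in>R. snd g r = snd h r)} | h P R.
        h \<in> dcAut X \<and> finite P \<and> P \<subseteq> X \<and> finite R \<and> R \<subseteq> {0..}}"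
  then obtain h P R where U: "U = {g \<in> dcAut X. (\<forall>x\<in>P. fst g x = fst h x) \<and> (\<forall>r\<in>R. snd g r = snd h r)}"
    and hPR: "h \<in> dcAut X" "finite P" "P \<subseteq> X" "finite R" "R \<subseteq> {0..}" by blast
  show "openin autQ_top (sec X -` U \<inter> topspace autQ_top)"
    unfolding openin_subopen[of _ "sec X -` U \<inter> topspace autQ_top"]
  proof
    fix \<phi> assume \<phi>: "\<phi> \<in> sec X -` U \<inter> topspace autQ_top"
    then have \<phi>a: "\<phi> \<in> autQ" using topspace_autQ by simp
    define A where "A = R \<union> \<Union> (supp ` P)"
    define T where "T = {\<psi> \<in> autQ. \<forall>a\<in>A. \<psi> a = \<phi> a}"
    have Afin: "finite A" unfolding A_def using hPR fin by auto
    have Apos: "A \<subseteq> {0..}" unfolding A_def using hPR by (auto simp: supp_def)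
    have "openin autQ_top T" unfolding autQ_top_def T_def
      by (rule topology_generated_by_Basis) (use \<phi>a Afin Apos in blast)
    moreover have "\<phi> \<in> T" using \<phi>a by (simp add: T_def)
    moreover have "T \<subseteq> sec X -` U \<inter> topspace autQ_top"
    proof
      fix \<psi> assume "\<psi> \<in> T"
      then have \<psi>: "\<psi> \<in> autQ" "\<forall>a\<in>A. \<psi> a = \<phi> a" by (auto simp: T_def)
      have "\<forall>x\<in>P. fst (sec X \<psi>) x = fst h x"
      proof
        fix x assume x: "x \<in> P"
        then have xX: "x \<in> X" using hPR by auto
        have "x \<circ> inv_into UNIV \<psi> = x \<circ> inv_into UNIV \<phi>"
        proof
          fix t show "(x \<circ> inv_into UNIV \<psi>) t = (x \<circ> inv_into UNIV \<phi>) t"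
            by (rule comp_agree[OF \<phi>a \<psi>(1) subsetD[OF XS xX]]) (use \<psi>(2) x in \<open>auto simp: A_def\<close>)
        qed
        moreover have "fst (sec X \<phi>) x = fst h x" using \<phi> x U by auto
        ultimately show "fst (sec X \<psi>) x = fst h x" using xX by (simp add: sec_def)
      qed
      moreover have "\<forall>r\<in>R. snd (sec X \<psi>) r = snd h r"
      proof
        fix r assume r: "r \<in> R"
        have "snd (sec X \<phi>) r = snd h r" using \<phi> r U by auto
        then show "snd (sec X \<psi>) r = snd h r" using \<psi>(2) r by (simp add: sec_def A_def)
      qed
      ultimately show "\<psi> \<in> sec X -` U \<inter> topspace autQ_top"
        using U sec_in[OF \<psi>(1)] \<psi>(1) topspace_autQ by simp
    qed
    ultimately show "\<exists>T. openin autQ_top T \<and> \<phi> \<in> T \<and> T \<subseteq> sec X -` U \<inter> topspace autQ_top" by blast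
  qed
qed

lemma cont_M:
  assumes fin: "\<And>x c. x \<in> X \<Longrightarrow> 0 < c \<Longrightarrow> finite {a\<in>supp x. c \<le> a}"
  shows "continuous_map autQ_top (dcAut_M_top X) (sec X)"
  unfolding dcAut_M_top_def
proof (rule continuous_on_generated_topo)
  show "sec X ` topspace autQ_top \<subseteq>
    \<Union> {{g \<in> dcAut X. \<forall>x\<in>A. vdist (fst g x) (fst h x) < r} | h A r.
        h \<in> dcAut X \<and> finite A \<and> A \<subseteq> X \<and> 0 < r}"
  proof
    fix g assume "g \<in> sec X ` topspace autQ_top"
    then have g: "g \<in> dcAut X" using sec_in topspace_autQ by auto
    have mem: "dcAut X \<in> {{g \<in> dcAut X. \<forall>x\<in>A. vdist (fst g x) (fst h x) < r} | h A r.
        h \<in> dcAut X \<and> finite A \<and> A \<subseteq> X \<and> 0 < r}"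
      apply (rule CollectI)
      apply (rule exI[of _ g], rule exI[of _ "{}"], rule exI[of _ "1::rat"])
      using g by simp
    from UnionI[OF mem g] show "g \<in> \<Union> {{g \<in> dcAut X. \<forall>x\<in>A. vdist (fst g x) (fst h x) < r} | h A r.
        h \<in> dcAut X \<and> finite A \<and> A \<subseteq> X \<and> 0 < r}" .
  qed
next
  fix U assume "U \<in> {{g \<in> dcAut X. \<forall>x\<in>A. vdist (fst g x) (fst h x) < r} | h A r.
        h \<in> dcAut X \<and> finite A \<and> A \<subseteq> X \<and> 0 < r}"
  then obtain h A r where U: "U = {g \<in> dcAut X. \<forall>x\<in>A. vdist (fst g x) (fst h x) < r}"
    and hAr: "h \<in> dcAut X" "finite A" "A \<subseteq> X" "0 < r" by blast
  show "openin autQ_top (sec X -` U \<inter> topspace autQ_top)"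
    unfolding openin_subopen[of _ "sec X -` U \<inter> topspace autQ_top"]
  proof
    fix \<phi> assume \<phi>: "\<phi> \<in> sec X -` U \<inter> topspace autQ_top"
    then have \<phi>a: "\<phi> \<in> autQ" using topspace_autQ by simp
    define c where "c = inv_into UNIV \<phi> r"
    have cpos: "0 < c" unfolding c_def using autQ_pos[OF autQ_inv[OF \<phi>a]] hAr(4) by simp
    have \<phi>c: "\<phi> c = r" unfolding c_def by (rule autQ_f_inv[OF \<phi>a])
    define B where "B = insert c (\<Union>x\<in>A. {a\<in>supp x. c \<le> a})"
    define T where "T = {\<psi> \<in> autQ. \<forall>a\<in>B. \<psi> a = \<phi> a}"
    have "finite (\<Union>x\<in>A. {a\<in>supp x. c \<le> a})"
      using hAr(2) by (rule finite_UN_I) (use fin hAr(3) cpos in blast)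
    then have Bfin: "finite B" unfolding B_def by simp
    have Bpos: "B \<subseteq> {0..}" unfolding B_def using cpos by (auto simp: supp_def)
    have "openin autQ_top T" unfolding autQ_top_def T_def
      by (rule topology_generated_by_Basis) (use \<phi>a Bfin Bpos in blast)
    moreover have "\<phi> \<in> T" using \<phi>a by (simp add: T_def)
    moreover have "T \<subseteq> sec X -` U \<inter> topspace autQ_top"
    proof
      fix \<psi> assume "\<psi> \<in> T"
      then have \<psi>: "\<psi> \<in> autQ" "\<forall>a\<in>B. \<psi> a = \<phi> a" by (auto simp: T_def)
      have \<psi>c: "\<psi> c = r" using \<psi>(2) \<phi>c by (simp add: B_def)
      have "\<forall>x\<in>A. vdist (fst (sec X \<psi>) x) (fst h x) < r"
      proof
        fix x assume x: "x \<in> A"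
        then have xX: "x \<in> X" using hAr by auto
        have hx: "fst h x \<in> X" by (rule fst_h_in[OF hAr(1) xX])
        have x\<psi>: "x \<circ> inv_into UNIV \<psi> \<in> X" by (rule Xcomp[OF \<psi>(1) xX])
        have x\<phi>: "x \<circ> inv_into UNIV \<phi> \<in> X" by (rule Xcomp[OF \<phi>a xX])
        have "sec X \<phi> \<in> U" using \<phi> by simp
        then have "vdist (fst (sec X \<phi>) x) (fst h x) < r" using x U by simp
        then have "vdist (x \<circ> inv_into UNIV \<phi>) (fst h x) < r" using xX by (simp add: sec_def)
        then have e1: "\<forall>t\<ge>r. (x \<circ> inv_into UNIV \<phi>) t = fst h x t"
          using vdist_lt[OF subsetD[OF XS x\<phi>] subsetD[OF XS hx] Xc[OF x\<phi>] Xc[OF hx] hAr(4)] by blast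
        have e2: "\<forall>t\<ge>r. (x \<circ> inv_into UNIV \<psi>) t = (x \<circ> inv_into UNIV \<phi>) t"
        proof (intro allI impI)
          fix t assume t: "r \<le> t"
          show "(x \<circ> inv_into UNIV \<psi>) t = (x \<circ> inv_into UNIV \<phi>) t"
          proof (rule comp_agree[OF \<phi>a \<psi>(1) subsetD[OF XS xX]])
            fix a assume a: "a \<in> supp x" "\<psi> a = t \<or> \<phi> a = t"
            have "c \<le> a"
            proof (cases "\<psi> a = t")
              case True then have "\<psi> c \<le> \<psi> a" using \<psi>c t by simp
              then show ?thesis using autQ_le[OF \<psi>(1)] by blast
            next
              case False then have "\<phi> c \<le> \<phi> a" using a \<phi>c t by simp
              then show ?thesis using autQ_le[OF \<phi>a] by blast
            qed
            then have "a \<in> B" using a x unfolding B_def by blast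
            then show "\<psi> a = \<phi> a" using \<psi>(2) by blast
          qed
        qed
        have "\<forall>t\<ge>r. (x \<circ> inv_into UNIV \<psi>) t = fst h x t" using e1 e2 by simp
        then have "vdist (x \<circ> inv_into UNIV \<psi>) (fst h x) < r"
          by (rule vdist_lt[OF subsetD[OF XS x\<psi>] subsetD[OF XS hx] Xc[OF x\<psi>] Xc[OF hx] hAr(4), THEN iffD2])
        then show "vdist (fst (sec X \<psi>) x) (fst h x) < r" using xX by (simp add: sec_def)
      qed
      then show "\<psi> \<in> sec X -` U \<inter> topspace autQ_top"
        using U sec_in[OF \<psi>(1)] \<psi>(1) topspace_autQ by simp
    qed
    ultimately show "\<exists>T. openin autQ_top T \<and> \<phi> \<in> T \<and> T \<subseteq> sec X -` U \<inter> topspace autQ_top" by blast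
  qed
qed

end

lemma goodV: "goodX (V S) S"
proof
  show "V S \<subseteq> Sfun S" by (auto simp: V_def)
qed (fact V_cwo, fact V_comp)
lemma goodVbar: "goodX (Vbar S) S"
proof
  show "Vbar S \<subseteq> Sfun S" by (auto simp: Vbar_def)
qed (fact Vbar_cwo, fact Vbar_comp)
lemma goodVhat: "goodX (Vhat S) S"
proof
  show "Vhat S \<subseteq> Sfun S" by (auto simp: Vhat_def)
qed (fact Vhat_cwo, fact Vhat_comp)
lemma goodVbb: "goodX (Vbb S) S"
proof
  show "Vbb S \<subseteq> Sfun S" by (auto simp: Vbb_def)
qed (fact Vbb_cwo, fact Vbb_comp)

theorem proposition3p26:
  fixes S :: "'a::zero set"
  assumes "0 \<in> S"
  shows "(\<exists>s. is_section (V S) s \<and> continuous_map autQ_top (dcAut_top (V S)) s)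
       \<and> (\<exists>s. is_section (Vbar S) s \<and> continuous_map autQ_top (dcAut_M_top (Vbar S)) s)
       \<and> (\<exists>s. is_section (Vhat S) s)
       \<and> (\<exists>s. is_section (Vbb S) s)"
proof (intro conjI)
  show "\<exists>s. is_section (V S) s \<and> continuous_map autQ_top (dcAut_top (V S)) s"
    using goodX.sec_hom[OF goodV] goodX.cont_pointwise[OF goodV] by (auto simp: V_def)
  show "\<exists>s. is_section (Vbar S) s \<and> continuous_map autQ_top (dcAut_M_top (Vbar S)) s"
    using goodX.sec_hom[OF goodVbar] goodX.cont_M[OF goodVbar] Vbar_fin by blast
  show "\<exists>s. is_section (Vhat S) s" using goodX.sec_hom[OF goodVhat] by blast
  show "\<exists>s. is_section (Vbb S) s" using goodX.sec_hom[OF goodVbb] by blast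
qed


end
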